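(* In the setting described in the context, assume the Lie differential operator $\pounds_\xi$ commutes with the contraction operator $S$, i.e. $\pounds_\xi\big(S(dx^i\otimes\partial_j)\big)=S\big(\pounds_\xi(dx^i\otimes\partial_j)\big)$ for all $i,j$ and all vector fields $\xi$. Then $\pounds_\xi dx^i=k^i{}_j(\xi)\,dx^j$ with $$k^i{}_j(\xi)=f_j{}^l\,\partial_l\xi^k\,f^i{}_k+f_j{}^l\,(\partial_kf^i{}_l)\,\xi^k .$$ If moreover $S$ commutes with the covariant differential operator $\nabla$, then $$\pounds_\xi dx^i=\Big[f^i{}_k\,\partial_l\xi^k\,f_j{}^l+\big(P^i_{jk}+f_j{}^l\,\Gamma^m_{lk}\,f^i{}_m\big)\xi^k\Big]dx^j,\qquad \pounds_{\partial_k}dx^i=\big(P^i_{jk}+f_j{}^l\,\Gamma^m_{lk}\,f^i{}_m\big)dx^j .$$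
   Context: $M$ is a smooth $n$-manifold with a covariant differential operator $\nabla$ acting on vector fields via a contravariant affine connection $\Gamma$ ($\nabla_{\partial_j}\partial_i=\Gamma^k_{ij}\partial_k$) and on 1-forms via a covariant affine connection $P$ ($\nabla_{\partial_j}dx^i=P^i_{kj}dx^k$), extended to tensors by the Leibniz rule. A contraction operator $S$ (nondegenerate $C^\infty$-bilinear pairing of vector fields and 1-forms, extended to tensor products) has $S(\partial_j,dx^i)=f^i{}_j$ with $\det(f^i{}_j)\ne0$; $f_j{}^i$ denotes the inverse matrix functions, $f^i{}_kf_j{}^k=\delta^i_j$, $f^k{}_if_k{}^j=\delta^j_i$. The Lie differential operator $\pounds_\xi$ acts on functions by $\pounds_\xi f=\xi f$, on vector fields by $\pounds_\xi u=[\xi,u]$ (so $\pounds_\xi\partial_i=-\partial_i\xi^j\,\partial_j$), is linear and satisfies the Leibniz rule on tensor products, and acts on 1-forms by $\pounds_\xi dx^i=k^i{}_j(\xi)dx^j$ for some functions $k^i{}_j(\xi)$ to be determined. *)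

theory Defs
  imports "HOL-Analysis.Analysis"
begin

text \<open>Local coordinate model on an open chart domain U of real^'n.  A vector field u = u^c d_c is given
  by its components (u c), a 1-form w = w_a dx^a by its components (w a), and a
  tensor in the span of the dx^a (x) d_b by its components (T a b).\<close>

type_synonym 'n fn = "real^'n \<Rightarrow> real"

definition pd :: "'n::finite \<Rightarrow> 'n fn \<Rightarrow> 'n fn" where
  "pd l g = (\<lambda>x. deriv (\<lambda>t. g (x + t *\<^sub>R axis l 1)) 0)"

definition smooth_fn :: "(real^'n::finite) set \<Rightarrow> 'n fn \<Rightarrow> bool" where
  "smooth_fn U g \<longleftrightarrow> (\<forall>ls. (fold pd ls g) differentiable_on U)"

definition smooth_vf :: "(real^'n::finite) set \<Rightarrow> ('n \<Rightarrow> 'n fn) \<Rightarrow> bool" where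
  "smooth_vf U u \<longleftrightarrow> (\<forall>c. smooth_fn U (u c))"

definition vf_apply :: "('n::finite \<Rightarrow> 'n fn) \<Rightarrow> 'n fn \<Rightarrow> 'n fn" where
  "vf_apply X g = (\<lambda>x. \<Sum>k\<in>UNIV. X k x * pd k g x)"

definition dd :: "'n::finite \<Rightarrow> ('n \<Rightarrow> 'n fn)" where
  "dd j = (\<lambda>c x. if c = j then 1 else 0)"

definition dx :: "'n::finite \<Rightarrow> ('n \<Rightarrow> 'n fn)" where
  "dx i = (\<lambda>a x. if a = i then 1 else 0)"

definition tp :: "('n \<Rightarrow> 'n fn) \<Rightarrow> ('n \<Rightarrow> 'n fn) \<Rightarrow> ('n \<Rightarrow> 'n \<Rightarrow> 'n fn)" where
  "tp w u = (\<lambda>a b x. w a x * u b x)"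

definition tadd :: "('n \<Rightarrow> 'n \<Rightarrow> 'n fn) \<Rightarrow> ('n \<Rightarrow> 'n \<Rightarrow> 'n fn) \<Rightarrow> ('n \<Rightarrow> 'n \<Rightarrow> 'n fn)" where
  "tadd T T' = (\<lambda>a b x. T a b x + T' a b x)"

text \<open>Contraction operator S with S(d_j, dx^i) = f^i_j (f i j = f^i_j), extended
  C-infinity-bilinearly: S(T^a_b dx^a (x) d_b) = T^a_b f^a_b.\<close>
definition contr :: "('n::finite \<Rightarrow> 'n \<Rightarrow> 'n fn) \<Rightarrow> ('n \<Rightarrow> 'n \<Rightarrow> 'n fn) \<Rightarrow> 'n fn" where
  "contr f T = (\<lambda>x. \<Sum>a\<in>UNIV. \<Sum>b\<in>UNIV. T a b x * f a b x)"

text \<open>Lie derivative of a vector field: L_xi u = [xi,u]; in particular L_xi d_i = - d_i xi^j d_j.\<close>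
definition lie_vec :: "('n::finite \<Rightarrow> 'n fn) \<Rightarrow> ('n \<Rightarrow> 'n fn) \<Rightarrow> ('n \<Rightarrow> 'n fn)" where
  "lie_vec xi u = (\<lambda>c x. vf_apply xi (u c) x - vf_apply u (xi c) x)"

text \<open>Lie derivative of a 1-form, determined by linearity, Leibniz and
  L_xi dx^a = k^a_m(xi) dx^m, where k xi a m = k^a_m(xi).\<close>
definition lie_form :: "(('n::finite \<Rightarrow> 'n fn) \<Rightarrow> 'n \<Rightarrow> 'n \<Rightarrow> 'n fn)
    \<Rightarrow> ('n \<Rightarrow> 'n fn) \<Rightarrow> ('n \<Rightarrow> 'n fn) \<Rightarrow> ('n \<Rightarrow> 'n fn)" where
  "lie_form k xi w = (\<lambda>m x. vf_apply xi (w m) x + (\<Sum>a\<in>UNIV. w a x * k xi a m x))"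

text \<open>Covariant derivative of a vector field: nabla_{d_j} d_i = Gamma^k_{ij} d_k,
  with Gam k i j = Gamma^k_{ij}.\<close>
definition nabla_vec :: "('n::finite \<Rightarrow> 'n \<Rightarrow> 'n \<Rightarrow> 'n fn) \<Rightarrow> ('n \<Rightarrow> 'n fn)
    \<Rightarrow> ('n \<Rightarrow> 'n fn) \<Rightarrow> ('n \<Rightarrow> 'n fn)" where
  "nabla_vec Gam X u = (\<lambda>c x. vf_apply X (u c) x
       + (\<Sum>b\<in>UNIV. \<Sum>k\<in>UNIV. u b x * X k x * Gam c b k x))"

text \<open>Covariant derivative of a 1-form: nabla_{d_j} dx^i = P^i_{kj} dx^k,
  with P i k j = P^i_{kj}.\<close>
definition nabla_form :: "('n::finite \<Rightarrow> 'n \<Rightarrow> 'n \<Rightarrow> 'n fn) \<Rightarrow> ('n \<Rightarrow> 'n fn)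
    \<Rightarrow> ('n \<Rightarrow> 'n fn) \<Rightarrow> ('n \<Rightarrow> 'n fn)" where
  "nabla_form P X w = (\<lambda>m x. vf_apply X (w m) x
       + (\<Sum>a\<in>UNIV. \<Sum>k\<in>UNIV. w a x * X k x * P a m k x))"

end

theory Submission
  imports Defs
begin

lemma ifm1: "(if P then (z::real) else 0) * y = (if P then z * y else 0)" by simp
lemma ifm2: "y * (if P then (z::real) else 0) = (if P then y * z else 0)" by simp
lemma sum_if_out: "(\<Sum>k\<in>S. if P then g k else (0::real)) = (if P then sum g S else 0)" by simp
lemmas deltas = ifm1 ifm2 sum_if_out sum.delta sum.delta'

lemma pd_const: "pd l (\<lambda>x. c) = (\<lambda>x. 0)"
  by (simp add: pd_def)

lemma dx_const: "dx i m = (\<lambda>x. if m = i then 1 else 0)"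
  by (simp add: dx_def)

lemma dd_const: "dd j b = (\<lambda>x. if b = j then 1 else 0)"
  by (simp add: dd_def)

lemma vf_const: "vf_apply X (\<lambda>x. c) x = 0"
  by (simp add: vf_apply_def pd_const)

lemma lie_form_dx: "lie_form k xi (dx i) m x = k xi i m x"
  unfolding lie_form_def dx_const vf_const
  by (simp add: deltas)

lemma contr_basic: "contr f (tp (dx i) (dd j)) = f i j"
  by (rule ext) (simp add: contr_def tp_def dx_def dd_def deltas)

lemma contr_split: "contr f (tadd (tp w (dd j)) (tp (dx i) V)) x
   = (\<Sum>a\<in>UNIV. w a x * f a j x) + (\<Sum>b\<in>UNIV. V b x * f i b x)"
  by (simp add: contr_def tadd_def tp_def dx_def dd_def algebra_simps sum.distrib
      deltas)

lemma lie_vec_dd: "lie_vec xi (dd j) b x = - pd j (xi b) x"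
  unfolding lie_vec_def dd_const vf_const
  by (simp add: vf_apply_def dd_def deltas)

lemma nabla_form_dx: "nabla_form P X (dx i) m x = (\<Sum>k\<in>UNIV. X k x * P i m k x)"
  unfolding nabla_form_def dx_const vf_const
  by (simp add: deltas)

lemma nabla_vec_dd: "nabla_vec Gam X (dd j) c x = (\<Sum>k\<in>UNIV. X k x * Gam c j k x)"
  unfolding nabla_vec_def dd_const vf_const
  by (simp add: deltas)

lemma solve:
  fixes A K :: "'n::finite \<Rightarrow> real"
  assumes "\<And>j. A j = (\<Sum>a\<in>UNIV. K a * F a j)"
    and "\<And>a m. (\<Sum>j\<in>UNIV. F a j * G m j) = (if a = m then 1 else 0)"
  shows "K m = (\<Sum>j\<in>UNIV. G m j * A j)"
proof -
  have "(\<Sum>j\<in>UNIV. G m j * A j) = (\<Sum>j\<in>UNIV. \<Sum>a\<in>UNIV. K a * (F a j * G m j))"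
    by (simp add: assms(1) sum_distrib_left algebra_simps)
  also have "\<dots> = (\<Sum>a\<in>UNIV. K a * (\<Sum>j\<in>UNIV. F a j * G m j))"
    by (subst sum.swap) (simp add: sum_distrib_left)
  also have "\<dots> = K m" by (simp add: assms(2) deltas)
  finally show ?thesis by simp
qed

lemma swap3: "(\<Sum>l\<in>A. \<Sum>p\<in>B. \<Sum>k\<in>C. g l p k) = (\<Sum>k\<in>C. \<Sum>l\<in>A. \<Sum>p\<in>B. g l p k)"
proof -
  have "(\<Sum>l\<in>A. \<Sum>p\<in>B. \<Sum>k\<in>C. g l p k) = (\<Sum>l\<in>A. \<Sum>k\<in>C. \<Sum>p\<in>B. g l p k)"
    by (rule sum.cong[OF refl], rule sum.swap)
  also have "\<dots> = (\<Sum>k\<in>C. \<Sum>l\<in>A. \<Sum>p\<in>B. g l p k)" by (rule sum.swap)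
  finally show ?thesis .
qed

lemma smooth_dd: "smooth_vf U (dd m)"
proof -
  have "fold pd ls (\<lambda>x. c) = (\<lambda>x. if ls = [] then c else 0)" for ls c
    by (induction ls arbitrary: c) (auto simp: pd_const)
  have "fold pd ls (\<lambda>x. c) differentiable_on U" for ls c
    unfolding \<open>\<And>ls c. fold pd ls (\<lambda>x. c) = _\<close> by (rule differentiable_on_const)
  then show ?thesis
    unfolding smooth_vf_def smooth_fn_def dd_const by auto
qed

theorem mainTheorem5:
  fixes U :: "(real^'n::finite) set"
    and f finv :: "'n \<Rightarrow> 'n \<Rightarrow> 'n fn"
    and Gam P :: "'n \<Rightarrow> 'n \<Rightarrow> 'n \<Rightarrow> 'n fn"
    and k :: "('n \<Rightarrow> 'n fn) \<Rightarrow> 'n \<Rightarrow> 'n \<Rightarrow> 'n fn"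
  assumes U_open: "open U"
    and f_smooth: "\<And>i j. smooth_fn U (f i j)"
    and finv_smooth: "\<And>i j. smooth_fn U (finv i j)"
    and Gam_smooth: "\<And>a b c. smooth_fn U (Gam a b c)"
    and P_smooth: "\<And>a b c. smooth_fn U (P a b c)"
    and f_det: "\<And>x. x \<in> U \<Longrightarrow> det (\<chi> i j. f i j x) \<noteq> 0"
    and f_inv1: "\<And>x i j. x \<in> U \<Longrightarrow> (\<Sum>l\<in>UNIV. f i l x * finv j l x) = (if i = j then 1 else 0)"
    and f_inv2: "\<And>x i j. x \<in> U \<Longrightarrow> (\<Sum>l\<in>UNIV. f l i x * finv l j x) = (if i = j then 1 else 0)"
    and lie_comm: "\<And>xi i j x. smooth_vf U xi \<Longrightarrow> x \<in> U \<Longrightarrow>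
        vf_apply xi (contr f (tp (dx i) (dd j))) x
        = contr f (tadd (tp (lie_form k xi (dx i)) (dd j)) (tp (dx i) (lie_vec xi (dd j)))) x"
  shows "(\<forall>xi i j x. smooth_vf U xi \<longrightarrow> x \<in> U \<longrightarrow>
            lie_form k xi (dx i) j x
            = (\<Sum>l\<in>UNIV. \<Sum>m\<in>UNIV. finv j l x * pd l (xi m) x * f i m x)
              + (\<Sum>l\<in>UNIV. \<Sum>m\<in>UNIV. finv j l x * pd m (f i l) x * xi m x))
       \<and> ((\<forall>X i j x. smooth_vf U X \<longrightarrow> x \<in> U \<longrightarrow>
              vf_apply X (contr f (tp (dx i) (dd j))) x
              = contr f (tadd (tp (nabla_form P X (dx i)) (dd j))
                              (tp (dx i) (nabla_vec Gam X (dd j)))) x)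
          \<longrightarrow> (\<forall>xi i j x. smooth_vf U xi \<longrightarrow> x \<in> U \<longrightarrow>
                 lie_form k xi (dx i) j x
                 = (\<Sum>m\<in>UNIV. \<Sum>l\<in>UNIV. f i m x * pd l (xi m) x * finv j l x)
                   + (\<Sum>m\<in>UNIV. (P i j m x
                        + (\<Sum>l\<in>UNIV. \<Sum>p\<in>UNIV. finv j l x * Gam p l m x * f i p x)) * xi m x))
            \<and> (\<forall>m i j x. x \<in> U \<longrightarrow>
                 lie_form k (dd m) (dx i) j x
                 = P i j m x + (\<Sum>l\<in>UNIV. \<Sum>p\<in>UNIV. finv j l x * Gam p l m x * f i p x)))"
proof -
  have part1: "lie_form k xi (dx i) j x
            = (\<Sum>l\<in>UNIV. \<Sum>m\<in>UNIV. finv j l x * pd l (xi m) x * f i m x)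
              + (\<Sum>l\<in>UNIV. \<Sum>m\<in>UNIV. finv j l x * pd m (f i l) x * xi m x)"
    if xs: "smooth_vf U xi" and xU: "x \<in> U" for xi i j x
  proof -
    have E: "(\<Sum>m\<in>UNIV. xi m x * pd m (f i l) x) + (\<Sum>m\<in>UNIV. pd l (xi m) x * f i m x)
        = (\<Sum>a\<in>UNIV. k xi i a x * f a l x)" for l
      using lie_comm[OF xs xU, of i l]
      by (simp add: contr_basic contr_split lie_form_dx lie_vec_dd vf_apply_def sum_negf)
    have "k xi i j x = (\<Sum>l\<in>UNIV. finv j l x * ((\<Sum>m\<in>UNIV. xi m x * pd m (f i l) x)
          + (\<Sum>m\<in>UNIV. pd l (xi m) x * f i m x)))"
      by (rule solve[where F="\<lambda>a l. f a l x"]) (use E f_inv1[OF xU] in auto)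
    then show ?thesis
      by (simp add: lie_form_dx sum_distrib_left sum.distrib algebra_simps)
  qed
  let "?A \<and> (?B \<longrightarrow> ?C \<and> ?D)" = ?thesis
  show ?thesis
  proof (intro conjI impI)
    show ?A using part1 by blast
  next
    assume nab: ?B
    have part2: "lie_form k xi (dx i) j x
                 = (\<Sum>m\<in>UNIV. \<Sum>l\<in>UNIV. f i m x * pd l (xi m) x * finv j l x)
                   + (\<Sum>m\<in>UNIV. (P i j m x
                        + (\<Sum>l\<in>UNIV. \<Sum>p\<in>UNIV. finv j l x * Gam p l m x * f i p x)) * xi m x)"
      if xs: "smooth_vf U xi" and xU: "x \<in> U" for xi i j x
    proof -
      have N: "(\<Sum>m\<in>UNIV. xi m x * pd m (f i l) x)
          = (\<Sum>a\<in>UNIV. (\<Sum>k\<in>UNIV. xi k x * P i a k x) * f a l x)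
            + (\<Sum>b\<in>UNIV. (\<Sum>k\<in>UNIV. xi k x * Gam b l k x) * f i b x)" for l
        using nab[rule_format, OF xs xU, of i l]
        by (simp add: contr_basic contr_split nabla_form_dx nabla_vec_dd vf_apply_def)
      have S: "(\<Sum>l\<in>UNIV. finv j l x * (\<Sum>a\<in>UNIV. (\<Sum>k\<in>UNIV. xi k x * P i a k x) * f a l x))
          = (\<Sum>k\<in>UNIV. xi k x * P i j k x)"
        by (rule solve[symmetric, where F="\<lambda>a l. f a l x"]) (use f_inv1[OF xU] in auto)
      have "lie_form k xi (dx i) j x
            = (\<Sum>l\<in>UNIV. \<Sum>m\<in>UNIV. finv j l x * pd l (xi m) x * f i m x)
              + (\<Sum>l\<in>UNIV. finv j l x * (\<Sum>m\<in>UNIV. xi m x * pd m (f i l) x))"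
        using part1[OF xs xU] by (simp add: sum_distrib_left algebra_simps)
      also have "\<dots> = (\<Sum>l\<in>UNIV. \<Sum>m\<in>UNIV. finv j l x * pd l (xi m) x * f i m x)
              + (\<Sum>k\<in>UNIV. xi k x * P i j k x)
              + (\<Sum>l\<in>UNIV. finv j l x * (\<Sum>b\<in>UNIV. (\<Sum>k\<in>UNIV. xi k x * Gam b l k x) * f i b x))"
        unfolding N by (simp add: distrib_left sum.distrib S)
      also have "\<dots> = (\<Sum>m\<in>UNIV. \<Sum>l\<in>UNIV. f i m x * pd l (xi m) x * finv j l x)
                   + (\<Sum>m\<in>UNIV. (P i j m x
                        + (\<Sum>l\<in>UNIV. \<Sum>p\<in>UNIV. finv j l x * Gam p l m x * f i p x)) * xi m x)"
        apply (simp add: sum_distrib_left sum_distrib_right sum.distrib algebra_simps)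
        apply (rule arg_cong2[where f="(+)"])
         apply (rule sum.swap)
        apply (rule swap3)
        done
      finally show ?thesis .
    qed
    show ?C using part2 by blast
    show ?D
    proof (intro allI impI)
      fix m i j x assume xU: "x \<in> U"
      show "lie_form k (dd m) (dx i) j x
                 = P i j m x + (\<Sum>l\<in>UNIV. \<Sum>p\<in>UNIV. finv j l x * Gam p l m x * f i p x)"
        using part2[OF smooth_dd xU, of m i j]
        by (simp add: dd_def pd_const deltas)
    qed
  qed
qed

end
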